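(* Let $g$ be a total recursive function such that, writing $\Phi_i(x,y)$ for the $i$-th $\Sigma^0_2$ formula, $\Phi_i(x,y)$ holds iff $W_{g(i,x,y)}$ is finite. Let $F(i,x,y,s)=\max_{y'\leq y}|W_{g(i,x,y'),s}|$ and $A_i=\{x:\forall y\ \lim_{s\to\infty}F(i,x,y,s)<\infty\}$. For every $i$ and $n$, let $B(i,n,y,s)=\min\{F(i,x,y,s):x\in B^n\}$. Then: if $A_i\cap B^n\neq\emptyset$, then for every $y$, $\lim_{s\to\infty}B(i,n,y,s)<\infty$; and if $A_i\cap B^n=\emptyset$, then there exists $y_0$ such that for all $y>y_0$, $\lim_{s\to\infty}B(i,n,y,s)=\infty$.
   Context: $W_e$ denotes the $e$-th recursively enumerable set and $W_{e,s}$ its enumeration up to stage $s$. For $x=\sum_{i=0}^{k}2^{n_i}\in\mathbb{Z}^+$ with $n_0<\cdots<n_k$, set $\mu(x)=n_k$. For each $n$, $B^n=\{x\in\mathbb{Z}^+:\mu(x)=n\}$ (a finite set). *)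

theory Defs
  imports Complex_Main
begin

definition mu :: "nat \<Rightarrow> nat" where
  "mu x = Max {n. bit x n}"

definition Bset :: "nat \<Rightarrow> nat set" where
  "Bset n = {x. 0 < x \<and> mu x = n}"

(* Ws e s plays the role of W_{e,s}; g the index function.
   F(i,x,y,s) = max_{y' <= y} |W_{g(i,x,y'),s}| *)
definition Ffun :: "(nat \<Rightarrow> nat \<Rightarrow> nat set) \<Rightarrow> (nat \<Rightarrow> nat \<Rightarrow> nat \<Rightarrow> nat)
                   \<Rightarrow> nat \<Rightarrow> nat \<Rightarrow> nat \<Rightarrow> nat \<Rightarrow> nat" where
  "Ffun Ws g i x y s = Max ((\<lambda>y'. card (Ws (g i x y') s)) ` {..y})"

definition Aset :: "(nat \<Rightarrow> nat \<Rightarrow> nat set) \<Rightarrow> (nat \<Rightarrow> nat \<Rightarrow> nat \<Rightarrow> nat)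
                   \<Rightarrow> nat \<Rightarrow> nat set" where
  "Aset Ws g i = {x. \<forall>y. \<exists>L::nat. (\<lambda>s. Ffun Ws g i x y s) \<longlonglongrightarrow> L}"

definition Bfun :: "(nat \<Rightarrow> nat \<Rightarrow> nat set) \<Rightarrow> (nat \<Rightarrow> nat \<Rightarrow> nat \<Rightarrow> nat)
                   \<Rightarrow> nat \<Rightarrow> nat \<Rightarrow> nat \<Rightarrow> nat \<Rightarrow> nat" where
  "Bfun Ws g i n y s = Min ((\<lambda>x. Ffun Ws g i x y s) ` Bset n)"

end

theory Submission imports Defs begin
lemma bit_le: "bit (x::nat) k \<Longrightarrow> k < x"
proof (rule ccontr)
  assume "bit x k" "\<not> k < x"
  then have "x < 2^k" using less_exp[of k] by linarith
  then show False using \<open>bit x k\<close> by (simp add: bit_iff_odd)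
qed
lemma Bset_finite: "finite (Bset n)"
proof (rule finite_subset[of _ "{..<2^(n+1)}"])
  show "Bset n \<subseteq> {..<2^(n+1)}"
  proof
    fix x assume "x \<in> Bset n"
    then have x0: "0 < x" and m: "Max {k. bit x k} = n" by (auto simp: Bset_def mu_def)
    have fin: "finite {k. bit x k}" by (rule finite_subset[of _ "{..<x}"]) (auto dest: bit_le)
    have "take_bit (n+1) x = x"
    proof (rule bit_eqI)
      fix k show "bit (take_bit (n+1) x) k = bit x k"
        using Max_ge[OF fin, of k] m by (auto simp: bit_take_bit_iff)
    qed
    then show "x \<in> {..<2^(n+1)}" using take_bit_nat_less_exp[of "n+1" x] by simp
  qed
qed simp
lemma Bset_ne: "(2::nat)^n \<in> Bset n"
proof -
  have "{k. bit ((2::nat)^n) k} = {n}" by (auto simp: bit_exp_iff)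
  then show ?thesis by (simp add: Bset_def mu_def)
qed

lemma incseq_conv:
  fixes f :: "nat \<Rightarrow> nat"
  assumes "incseq f"
  shows "(\<exists>L. f \<longlonglongrightarrow> L) \<longleftrightarrow> (\<exists>B. \<forall>s. f s \<le> B)"
proof
  assume "\<exists>L. f \<longlonglongrightarrow> L"
  then obtain L where L: "f \<longlonglongrightarrow> L" by blast
  have "\<forall>\<^sub>F s in sequentially. f s < Suc L" using order_tendstoD(2)[OF L] by simp
  then obtain N where N: "\<And>s. s \<ge> N \<Longrightarrow> f s < Suc L" by (auto simp: eventually_sequentially)
  have "f s \<le> L" for s
  proof -
    have "f s \<le> f (max s N)" using assms by (simp add: incseq_def)
    also have "\<dots> < Suc L" using N by simp
    finally show ?thesis by simp
  qed
  then show "\<exists>B. \<forall>s. f s \<le> B" by blast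
next
  assume "\<exists>B. \<forall>s. f s \<le> B"
  then have "bdd_above (range f)" by (auto simp: bdd_above_def)
  then show "\<exists>L. f \<longlonglongrightarrow> L" using LIMSEQ_incseq_SUP[OF _ assms] by blast
qed

lemma incseq_unb:
  fixes f :: "nat \<Rightarrow> nat"
  assumes "incseq f" "\<not> (\<exists>B. \<forall>s. f s \<le> B)"
  shows "filterlim f at_top sequentially"
  unfolding filterlim_at_top
proof
  fix Z
  obtain N where "\<not> f N \<le> Z" using assms(2) by blast
  then have "\<forall>s\<ge>N. Z \<le> f s" using assms(1) by (auto simp: incseq_def intro: order.trans[of _ "f N"])
  then show "\<forall>\<^sub>F s in sequentially. Z \<le> f s" by (auto simp: eventually_sequentially)
qed

theorem lemma3p5:
  fixes W :: "nat \<Rightarrow> nat set"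
    and Ws :: "nat \<Rightarrow> nat \<Rightarrow> nat set"
    and g :: "nat \<Rightarrow> nat \<Rightarrow> nat \<Rightarrow> nat"
    and Phi :: "nat \<Rightarrow> nat \<Rightarrow> nat \<Rightarrow> bool"
    and i n :: nat
  assumes Ws_finite: "\<And>e s. finite (Ws e s)"
    and Ws_mono: "\<And>e s. Ws e s \<subseteq> Ws e (Suc s)"
    and W_union: "\<And>e. W e = (\<Union>s. Ws e s)"
    and g_Phi: "\<And>j x y. Phi j x y \<longleftrightarrow> finite (W (g j x y))"
  shows "(Aset Ws g i \<inter> Bset n \<noteq> {} \<longrightarrow>
            (\<forall>y. \<exists>L::nat. (\<lambda>s. Bfun Ws g i n y s) \<longlonglongrightarrow> L))
       \<and> (Aset Ws g i \<inter> Bset n = {} \<longrightarrow>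
            (\<exists>y0. \<forall>y>y0. filterlim (\<lambda>s. Bfun Ws g i n y s) at_top at_top))"
proof -
  have card_mono: "card (Ws e s) \<le> card (Ws e t)" if "s \<le> t" for e s t
  proof -
    have "Ws e s \<subseteq> Ws e t" using lift_Suc_mono_le[of "Ws e", OF Ws_mono that] .
    then show ?thesis by (rule card_mono[OF Ws_finite])
  qed
  have F_mono_s: "Ffun Ws g i x y s \<le> Ffun Ws g i x y t" if "s \<le> t" for x y s t
    unfolding Ffun_def
  proof (rule Max.boundedI)
    fix a assume "a \<in> (\<lambda>y'. card (Ws (g i x y') s)) ` {..y}"
    then obtain y' where y': "y' \<le> y" "a = card (Ws (g i x y') s)" by auto
    have "a \<le> card (Ws (g i x y') t)" using y' card_mono[OF that] by simp
    also have "\<dots> \<le> Max ((\<lambda>y'. card (Ws (g i x y') t)) ` {..y})" using y' by (intro Max_ge) auto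
    finally show "a \<le> Max ((\<lambda>y'. card (Ws (g i x y') t)) ` {..y})" .
  qed auto
  have F_mono_y: "Ffun Ws g i x y s \<le> Ffun Ws g i x y' s" if "y \<le> y'" for x y y' s
    unfolding Ffun_def using that by (intro Max_mono) auto
  have Bfin: "finite (Bset n)" and Bne: "Bset n \<noteq> {}" using Bset_finite Bset_ne by auto
  have B_mono: "incseq (\<lambda>s. Bfun Ws g i n y s)" for y
    unfolding incseq_def Bfun_def
  proof (intro allI impI)
    fix s t :: nat assume st: "s \<le> t"
    show "Min ((\<lambda>x. Ffun Ws g i x y s) ` Bset n) \<le> Min ((\<lambda>x. Ffun Ws g i x y t) ` Bset n)"
      using Bfin Bne by (auto simp: Min_le_iff intro: order.trans[OF _ F_mono_s[OF st]])
  qed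
  have F_inc: "incseq (\<lambda>s. Ffun Ws g i x y s)" for x y
    using F_mono_s by (simp add: incseq_def)
  show ?thesis
  proof (intro conjI impI)
    assume "Aset Ws g i \<inter> Bset n \<noteq> {}"
    then obtain x where xA: "x \<in> Aset Ws g i" and xB: "x \<in> Bset n" by blast
    show "\<forall>y. \<exists>L::nat. (\<lambda>s. Bfun Ws g i n y s) \<longlonglongrightarrow> L"
    proof
      fix y
      obtain C where C: "\<And>s. Ffun Ws g i x y s \<le> C"
        using xA incseq_conv[OF F_inc] unfolding Aset_def by blast
      have "Bfun Ws g i n y s \<le> C" for s
        unfolding Bfun_def using Bfin xB C by (auto intro: order.trans[OF Min_le])
      then show "\<exists>L::nat. (\<lambda>s. Bfun Ws g i n y s) \<longlonglongrightarrow> L"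
        using incseq_conv[OF B_mono] by blast
    qed
  next
    assume empty: "Aset Ws g i \<inter> Bset n = {}"
    have "\<forall>x\<in>Bset n. \<exists>y. \<not> (\<exists>C. \<forall>s. Ffun Ws g i x y s \<le> C)"
      using empty incseq_conv[OF F_inc] unfolding Aset_def by blast
    then obtain yf where yf: "\<And>x. x \<in> Bset n \<Longrightarrow> \<not> (\<exists>C. \<forall>s. Ffun Ws g i x (yf x) s \<le> C)"
      by metis
    define y0 where "y0 = Max (yf ` Bset n)"
    show "\<exists>y0. \<forall>y>y0. filterlim (\<lambda>s. Bfun Ws g i n y s) at_top at_top"
    proof (intro exI allI impI)
      fix y assume "y > y0"
      have lim: "filterlim (\<lambda>s. Ffun Ws g i x y s) at_top sequentially" if xB: "x \<in> Bset n" for x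
      proof (rule incseq_unb[OF F_inc], rule notI)
        assume "\<exists>C. \<forall>s. Ffun Ws g i x y s \<le> C"
        then obtain C where C: "\<And>s. Ffun Ws g i x y s \<le> C" by blast
        have "yf x \<le> y" using \<open>y > y0\<close> Max_ge[OF finite_imageI[OF Bfin], of "yf x" yf] xB
          unfolding y0_def by auto
        then have "Ffun Ws g i x (yf x) s \<le> C" for s using F_mono_y C order.trans by blast
        then show False using yf[OF xB] by blast
      qed
      show "filterlim (\<lambda>s. Bfun Ws g i n y s) at_top at_top"
        unfolding filterlim_at_top
      proof
        fix Z
        have "\<forall>\<^sub>F s in sequentially. \<forall>x\<in>Bset n. Z \<le> Ffun Ws g i x y s"
          using lim Bfin by (intro eventually_ball_finite) (auto simp: filterlim_at_top)
        then show "\<forall>\<^sub>F s in at_top. Z \<le> Bfun Ws g i n y s"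
          by eventually_elim (use Bfin Bne in \<open>auto simp: Bfun_def\<close>)
      qed
    qed
  qed
qed

end
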